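(* Let $W=\{0,\tfrac13,\tfrac12,\tfrac23\}\subset S^1$. Then $P(W)$ holds.
   Context: Identify $S^1$ with $\mathbb{R}/\mathbb{Z}$. The group $O(2)$ acts on $S^1$ by translations $x\mapsto x+a$ and reflections $x\mapsto -x+2a$. A coloring $c:S^1\to\{R,B\}$ is distinguishing if no non-identity $\gamma\in O(2)$ satisfies $c\circ\gamma=c$. For $W\subset S^1$ with trivial pointwise stabilizer in $O(2)$, $P(W)$ holds if every precoloring $c:S^1\setminus W\to\{R,B\}$ extends to a distinguishing coloring of $S^1$. *)

theory Defs
  imports Complex_Main
begin

text \<open>The circle S^1 = R/Z is modelled by real numbers modulo 1: a point of S^1 is
  represented by any real x, and x, y represent the same point iff frac x = frac y.
  A function on S^1 is a 1-periodic function on the reals.\<close>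

datatype color = R | B

definition on_circle :: "(real \<Rightarrow> 'a) \<Rightarrow> bool" where
  "on_circle f \<longleftrightarrow> (\<forall>x. f (x + 1) = f x)"

text \<open>Elements of O(2) acting on S^1: translations x \<mapsto> x + a and reflections
  x \<mapsto> -x + 2a (the parameter a is taken modulo 1, resp. modulo 1/2).\<close>
datatype o2 = Trans real | Refl real

fun act :: "o2 \<Rightarrow> real \<Rightarrow> real" where
  "act (Trans a) x = x + a"
| "act (Refl a) x = - x + 2 * a"

definition is_identity :: "o2 \<Rightarrow> bool" where
  "is_identity g \<longleftrightarrow> (\<exists>a. g = Trans a \<and> a \<in> \<int>)"

definition distinguishing :: "(real \<Rightarrow> color) \<Rightarrow> bool" where
  "distinguishing c \<longleftrightarrow>
     (\<forall>g. (\<forall>x. c (act g x) = c x) \<longrightarrow> is_identity g)"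

text \<open>W is a subset of S^1 given by representatives; a real x lies (as a point of S^1)
  in W iff frac x \<in> frac ` W.\<close>
definition in_circle_set :: "real \<Rightarrow> real set \<Rightarrow> bool" where
  "in_circle_set x W \<longleftrightarrow> frac x \<in> frac ` W"

definition trivial_pointwise_stabilizer :: "real set \<Rightarrow> bool" where
  "trivial_pointwise_stabilizer W \<longleftrightarrow>
     (\<forall>g. (\<forall>w\<in>W. frac (act g w) = frac w) \<longrightarrow> is_identity g)"

text \<open>A precoloring of S^1 \ W is represented by a coloring
  p of S^1 whose values on W are ignored.\<close>
definition P :: "real set \<Rightarrow> bool" where
  "P W \<longleftrightarrow> trivial_pointwise_stabilizer W \<and>
     (\<forall>p. on_circle p \<longrightarrow>
        (\<exists>c. on_circle c \<and> distinguishing c \<and>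
             (\<forall>x. \<not> in_circle_set x W \<longrightarrow> c x = p x)))"

end

theory Submission
  imports Defs
begin

definition isH :: "real \<Rightarrow> bool" where
  "isH x \<longleftrightarrow> (\<exists>k::int. x = of_int k / 6)"

lemma isH_int: "isH (of_int k / 6)" by (auto simp: isH_def)

lemma isH_add: assumes "isH x" "isH y" shows "isH (x + y)"
proof -
  obtain a b :: int where "x = of_int a / 6" "y = of_int b / 6" using assms by (auto simp: isH_def)
  then have e: "x + y = of_int (a + b) / 6" by (simp add: add_divide_distrib)
  show ?thesis unfolding isH_def by (rule exI[of _ "a + b"], rule e)
qed

lemma isH_neg: assumes "isH x" shows "isH (- x)"
proof -
  obtain a :: int where "x = of_int a / 6" using assms by (auto simp: isH_def)
  then have e: "- x = of_int (- a) / 6" by simp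
  show ?thesis unfolding isH_def by (rule exI[of _ "- a"], rule e)
qed

lemma isH_neg_iff: "isH (- x) \<longleftrightarrow> isH x"
  using isH_neg[of x] isH_neg[of "-x"] by auto

lemma isH_diff: "isH x \<Longrightarrow> isH y \<Longrightarrow> isH (x - y)"
  using isH_add[of x "-y"] isH_neg[of y] by simp

lemma isH_add_iff: "isH e \<Longrightarrow> isH (z + e) \<longleftrightarrow> isH z"
  using isH_add[of z e] isH_diff[of "z + e" e] by auto

lemma isH_diff_iff: "isH e \<Longrightarrow> isH (z - e) \<longleftrightarrow> isH z"
  using isH_diff[of z e] isH_add[of "z - e" e] by auto

lemma isH_diff_iff2: "isH e \<Longrightarrow> isH (e - z) \<longleftrightarrow> isH z"
  using isH_diff[of e z] isH_diff[of e "e - z"] by auto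

lemma isH_Ints: assumes "x \<in> \<int>" shows "isH x"
proof -
  obtain n where "x = of_int n" using assms Ints_cases by blast
  then have e: "x = of_int (6 * n) / 6" by simp
  show ?thesis unfolding isH_def by (rule exI[of _ "6 * n"], rule e)
qed

lemma notH_notInt: "\<not> isH x \<Longrightarrow> x \<notin> \<int>" using isH_Ints by blast

lemma isH_one: "isH 1" using isH_Ints[of 1] by simp

lemma per_nat: assumes "on_circle f" shows "f (x + of_nat m) = f x"
proof (induction m arbitrary: x)
  case 0 then show ?case by simp
next
  case (Suc m)
  have e: "x + of_nat (Suc m) = (x + of_nat m) + 1" by simp
  have "f (x + of_nat (Suc m)) = f ((x + of_nat m) + 1)" by (simp only: e)
  also have "\<dots> = f (x + of_nat m)" using assms unfolding on_circle_def by blast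
  finally show ?case using Suc by simp
qed

lemma per_int: assumes "on_circle f" shows "f (x + of_int n) = f x"
proof (cases "n \<ge> 0")
  case True
  define m where "m = nat n"
  have m: "n = int m" using True m_def by simp
  have "f (x + of_nat m) = f x" by (rule per_nat[OF assms])
  then show ?thesis using m by simp
next
  case False
  define m where "m = nat (- n)"
  have m: "n = - int m" using False m_def by simp
  have "f ((x + of_int n) + of_nat m) = f (x + of_int n)" by (rule per_nat[OF assms])
  moreover have "(x + of_int n) + of_nat m = x" using m by simp
  ultimately show ?thesis by simp
qed

lemma per_Ints: assumes "on_circle f" "y \<in> \<int>" shows "f (x + y) = f x"
proof -
  obtain n where "y = of_int n" using assms(2) Ints_cases by blast
  then show ?thesis using per_int[OF assms(1), of x n] by simp
qed

definition col :: "(real \<Rightarrow> color) \<Rightarrow> (int \<Rightarrow> color) \<Rightarrow> real \<Rightarrow> color" where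
  "col p F x = (if isH x then F (\<lfloor>6 * x\<rfloor> mod 6) else p x)"

lemma col_H: "col p F (of_int k / 6) = F (k mod 6)"
  by (simp add: col_def isH_int)

lemma col_nH: "\<not> isH x \<Longrightarrow> col p F x = p x"
  by (simp add: col_def)

lemma col_on_circle: assumes "on_circle p" shows "on_circle (col p F)"
  unfolding on_circle_def
proof
  fix x
  show "col p F (x + 1) = col p F x"
  proof (cases "isH x")
    case True
    then obtain k where k: "x = of_int k / 6" by (auto simp: isH_def)
    have e: "x + 1 = of_int (k + 6) / 6" using k by (simp add: field_simps)
    have a: "col p F (x + 1) = F ((k + 6) mod 6)" by (subst e, rule col_H)
    have b: "col p F x = F (k mod 6)" by (subst k, rule col_H)
    show ?thesis using a b by simp
  next
    case False
    then have "\<not> isH (x + 1)" using isH_add_iff[OF isH_one] by simp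
    then show ?thesis using False assms by (simp add: col_nH on_circle_def)
  qed
qed

lemma col_agree:
  assumes op: "on_circle p" and f1: "F 1 = p (1/6)" and f5: "F 5 = p (5/6)"
    and nW: "\<not> in_circle_set x {0, 1/3, 1/2, 2/3}"
  shows "col p F x = p x"
proof (cases "isH x")
  case False then show ?thesis by (simp add: col_nH)
next
  case True
  then obtain k where k: "x = of_int k / 6" by (auto simp: isH_def)
  define r where "r = k mod 6"
  define n where "n = k div 6"
  have kr: "k = 6 * n + r" unfolding r_def n_def by simp
  have xr: "x = of_int r / 6 + of_int n" using k kr by (simp add: field_simps)
  have r0: "0 \<le> r" "r < 6" unfolding r_def by auto
  have fr: "frac x = frac (of_int r / 6)" using xr by simp
  have inW: "in_circle_set x {0, 1/3, 1/2, 2/3}" if "of_int r / 6 \<in> ({0, 1/3, 1/2, 2/3} :: real set)"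
    unfolding in_circle_set_def using fr that by blast
  consider "r = 0" | "r = 1" | "r = 2" | "r = 3" | "r = 4" | "r = 5" using r0 by linarith
  then show ?thesis
  proof cases
    case 1 then show ?thesis using inW nW by simp
  next
    case 2
    have "col p F x = F (k mod 6)" by (subst k, rule col_H)
    then have "col p F x = F 1" using r_def 2 by simp
    moreover have "p x = p (1/6)" using xr 2 per_int[OF op] by simp
    ultimately show ?thesis using f1 by simp
  next
    case 3 then show ?thesis using inW nW by simp
  next
    case 4 then show ?thesis using inW nW by simp
  next
    case 5 then show ?thesis using inW nW by simp
  next
    case 6
    have "col p F x = F (k mod 6)" by (subst k, rule col_H)
    then have "col p F x = F 5" using r_def 6 by simp
    moreover have "p x = p (5/6)" using xr 6 per_int[OF op] by simp
    ultimately show ?thesis using f5 by simp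
  qed
qed

lemma trivstab: "trivial_pointwise_stabilizer {0, 1/3, 1/2, 2/3}"
  unfolding trivial_pointwise_stabilizer_def
proof (intro allI impI)
  fix g assume h: "\<forall>w\<in>{0, 1/3, 1/2, 2/3::real}. frac (act g w) = frac w"
  show "is_identity g"
  proof (cases g)
    case (Trans a)
    have "frac (act g 0) = frac (0::real)" using h by simp
    then have "a \<in> \<int>" using Trans by simp
    then show ?thesis using Trans by (simp add: is_identity_def)
  next
    case (Refl a)
    from h Refl have h0: "frac (2 * a) = 0" by auto
    from h Refl have h1: "frac (- (1/3) + 2 * a) = frac (1/3)" by auto
    from h0 have "2 * a \<in> \<int>" by simp
    then have "frac (2 * a + (- (1/3))) = frac (- (1/3) :: real)" by (rule frac_add_int_left)
    then have "frac (- (1/3) + 2 * a) = frac (- (1/3) :: real)" by (simp add: add.commute)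
    also have "\<dots> = 2/3"
    proof -
      have e: "(- (1/3)::real) - 2/3 = - 1" by simp
      show ?thesis unfolding frac_unique_iff e by simp
    qed
    finally have "frac (1/3 :: real) = 2/3" using h1 by simp
    moreover have "frac (1/3 :: real) = 1/3" by (simp add: frac_unique_iff)
    ultimately show ?thesis by simp
  qed
qed

definition rotinv :: "(int \<Rightarrow> color) \<Rightarrow> int \<Rightarrow> bool" where
  "rotinv F j \<longleftrightarrow> (\<forall>k. F ((k + j) mod 6) = F (k mod 6))"
definition refinv :: "(int \<Rightarrow> color) \<Rightarrow> int \<Rightarrow> bool" where
  "refinv F m \<longleftrightarrow> (\<forall>k. F ((m - k) mod 6) = F (k mod 6))"
definition rotrel :: "(int \<Rightarrow> color) \<Rightarrow> (int \<Rightarrow> color) \<Rightarrow> bool" where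
  "rotrel F G \<longleftrightarrow> (\<exists>s. \<forall>k. G (k mod 6) = F ((k - s) mod 6))"
definition CaseI :: "(real \<Rightarrow> color) \<Rightarrow> bool" where
  "CaseI p \<longleftrightarrow> (\<exists>v. isH v \<and> v \<notin> \<int> \<and> (\<forall>x. \<not> isH x \<longrightarrow> p (x + v) = p x))"
definition RefSym :: "(real \<Rightarrow> color) \<Rightarrow> real \<Rightarrow> bool" where
  "RefSym p b \<longleftrightarrow> (\<forall>x. \<not> isH x \<longrightarrow> p (b - x) = p x)"

lemma sixth_add: "of_int k / 6 + of_int j / 6 = (of_int (k + j) / 6 :: real)"
  by (simp add: add_divide_distrib)
lemma sixth_diff: "of_int m / 6 - of_int k / 6 = (of_int (m - k) / 6 :: real)"
  by (simp add: diff_divide_distrib)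

lemma sym_trans_H_p:
  assumes "isH a" "\<forall>x. col p F (x + a) = col p F x"
  shows "\<forall>x. \<not> isH x \<longrightarrow> p (x + a) = p x"
proof (intro allI impI)
  fix x assume nx: "\<not> isH x"
  then have n: "\<not> isH (x + a)" using isH_add_iff[OF assms(1)] by simp
  have e: "col p F (x + a) = col p F x" using assms(2) by blast
  show "p (x + a) = p x" using e col_nH[OF nx] col_nH[OF n] by simp
qed

lemma sym_trans_H_rot:
  assumes "\<forall>x. col p F (x + of_int j / 6) = col p F x"
  shows "rotinv F j"
  unfolding rotinv_def
proof
  fix k
  have "col p F (of_int k / 6 + of_int j / 6) = col p F (of_int k / 6)" using assms by blast
  then show "F ((k + j) mod 6) = F (k mod 6)" by (simp only: sixth_add col_H)
qed

lemma sym_refl_H_p: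
  assumes "isH b" "\<forall>x. col p F (b - x) = col p F x"
  shows "RefSym p b"
  unfolding RefSym_def
proof (intro allI impI)
  fix x assume nx: "\<not> isH x"
  then have n: "\<not> isH (b - x)" using isH_diff_iff2[OF assms(1)] by simp
  have e: "col p F (b - x) = col p F x" using assms(2) by blast
  show "p (b - x) = p x" using e col_nH[OF nx] col_nH[OF n] by simp
qed

lemma sym_refl_H_ref:
  assumes "\<forall>x. col p F (of_int m / 6 - x) = col p F x"
  shows "refinv F m"
  unfolding refinv_def
proof
  fix k
  have "col p F (of_int m / 6 - of_int k / 6) = col p F (of_int k / 6)" using assms by blast
  then show "F ((m - k) mod 6) = F (k mod 6)" by (simp only: sixth_diff col_H)
qed

lemma moving_refl:
  assumes "\<not> isH b" "\<forall>x. col p F (b - x) = col p F x"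
  shows "F (k mod 6) = p (b - of_int k / 6)"
proof -
  have "\<not> isH (b - of_int k / 6)" using assms(1) isH_diff_iff[OF isH_int] by simp
  then have "col p F (b - of_int k / 6) = p (b - of_int k / 6)" by (simp add: col_nH)
  moreover have "col p F (b - of_int k / 6) = col p F (of_int k / 6)" using assms(2) by blast
  ultimately show ?thesis by (simp add: col_H)
qed

lemma moving_trans:
  assumes "\<not> isH t" "\<forall>x. col p F (x + t) = col p F x"
  shows "F (k mod 6) = p (of_int k / 6 + t)"
proof -
  have "\<not> isH (t + of_int k / 6)" using assms(1) isH_add_iff[OF isH_int] by simp
  then have "\<not> isH (of_int k / 6 + t)" by (simp add: add.commute)
  then have "col p F (of_int k / 6 + t) = p (of_int k / 6 + t)" by (simp add: col_nH)
  moreover have "col p F (of_int k / 6 + t) = col p F (of_int k / 6)" using assms(2) by blast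
  ultimately show ?thesis by (simp add: col_H)
qed

lemma KT_refl:
  assumes per: "\<forall>x. \<not> isH x \<longrightarrow> p (x + of_int j / 6) = p x"
    and nb: "\<not> isH b" and sy: "\<forall>x. col p F (b - x) = col p F x"
  shows "rotinv F j"
  unfolding rotinv_def
proof
  fix k
  define z where "z = (of_int k / 6 :: real)"
  define v where "v = (of_int j / 6 :: real)"
  have hz: "isH z" "isH v" unfolding z_def v_def by (rule isH_int)+
  have n1: "\<not> isH (b - z)" using nb isH_diff_iff[OF hz(1)] by simp
  have n2: "\<not> isH (b - z - v)" using n1 isH_diff_iff[OF hz(2)] by simp
  have "col p F z = col p F (b - z)" using sy by simp
  also have "\<dots> = p (b - z)" using n1 by (simp add: col_nH)
  also have "\<dots> = p ((b - z - v) + v)" by simp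
  also have "\<dots> = p (b - z - v)" using per n2 unfolding v_def by blast
  also have "\<dots> = col p F (b - z - v)" using n2 by (simp add: col_nH)
  also have "\<dots> = col p F (b - (z + v))" by (simp add: algebra_simps)
  also have "\<dots> = col p F (z + v)" using sy by blast
  finally have "col p F z = col p F (z + v)" .
  then show "F ((k + j) mod 6) = F (k mod 6)" unfolding z_def v_def by (simp only: sixth_add col_H)
qed

lemma KT_trans:
  assumes per: "\<forall>x. \<not> isH x \<longrightarrow> p (x + of_int j / 6) = p x"
    and nt: "\<not> isH t" and sy: "\<forall>x. col p F (x + t) = col p F x"
  shows "rotinv F j"
  unfolding rotinv_def
proof
  fix k
  define z where "z = (of_int k / 6 :: real)"
  define v where "v = (of_int j / 6 :: real)"
  have hz: "isH z" "isH v" unfolding z_def v_def by (rule isH_int)+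
  have n1: "\<not> isH (t + z)" using nt isH_add_iff[OF hz(1)] by simp
  have n2: "\<not> isH (t + z + v)" using n1 isH_add_iff[OF hz(2)] by simp
  have "col p F z = col p F (z + t)" using sy by simp
  also have "\<dots> = p (z + t)" using n1 by (simp add: col_nH add.commute)
  also have "\<dots> = p ((z + t) + v)" using per n1 unfolding v_def by (simp add: add.commute)
  also have "\<dots> = col p F ((z + v) + t)" using n2 by (simp add: col_nH algebra_simps)
  also have "\<dots> = col p F (z + v)" using sy by blast
  finally have "col p F z = col p F (z + v)" .
  then show "F ((k + j) mod 6) = F (k mod 6)" unfolding z_def v_def by (simp only: sixth_add col_H)
qed

lemma KR_trans:
  assumes rs: "RefSym p (of_int m / 6)"
    and nt: "\<not> isH t" and sy: "\<forall>x. col p F (x + t) = col p F x"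
  shows "refinv F m"
  unfolding refinv_def
proof
  fix k
  define z where "z = (of_int k / 6 :: real)"
  define b where "b = (of_int m / 6 :: real)"
  have hz: "isH z" "isH b" unfolding z_def b_def by (rule isH_int)+
  have n1: "\<not> isH (z + t)" using nt isH_add_iff[OF hz(1)] by (simp add: add.commute)
  have n2: "\<not> isH (b - z - t)" using nt isH_diff_iff2[OF hz(2), of "z + t"] isH_add_iff[OF hz(1), of t]
    by (simp add: add.commute diff_diff_eq)
  have "col p F z = col p F (z + t)" using sy by simp
  also have "\<dots> = p (z + t)" using n1 by (simp add: col_nH)
  also have "\<dots> = p (b - (z + t))" using rs n1 unfolding RefSym_def b_def by simp
  also have "\<dots> = col p F (b - z - t)" using n2 by (simp add: col_nH diff_diff_eq)
  also have "\<dots> = col p F (b - z)" using sy[rule_format, of "b - z - t"] by simp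
  finally have "col p F z = col p F (b - z)" .
  then show "F ((m - k) mod 6) = F (k mod 6)" unfolding z_def b_def by (simp only: sixth_diff col_H)
qed

lemma walk3:
  assumes s1: "\<forall>x. c1 (b1 - x) = c1 x" and s2: "\<forall>x. c2 (b2 - x) = c2 x"
    and s3: "\<forall>x. c3 (b3 - x) = c3 x"
    and a1: "\<forall>x. \<not> isH x \<longrightarrow> c1 x = p x" and a2: "\<forall>x. \<not> isH x \<longrightarrow> c2 x = p x"
    and a3: "\<forall>x. \<not> isH x \<longrightarrow> c3 x = p x"
    and h2: "\<not> isH b2" and h12: "\<not> isH (b1 - b2)" and hs: "\<not> isH (b3 - b1 + b2)"
    and h13: "\<not> isH (b1 - b3)" and h3: "\<not> isH b3"
    and he: "isH e"
  shows "c3 e = c2 e"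
proof -
  define y1 where "y1 = b2 - e"
  define y2 where "y2 = (b1 - b2) + e"
  define y3 where "y3 = (b3 - b1 + b2) - e"
  define y4 where "y4 = (b1 - b3) + e"
  define y5 where "y5 = b3 - e"
  have n1: "\<not> isH y1" unfolding y1_def using h2 isH_diff_iff[OF he] by simp
  have n2: "\<not> isH y2" unfolding y2_def using h12 isH_add_iff[OF he] by simp
  have n3: "\<not> isH y3" unfolding y3_def using hs isH_diff_iff[OF he] by simp
  have n4: "\<not> isH y4" unfolding y4_def using h13 isH_add_iff[OF he] by simp
  have n5: "\<not> isH y5" unfolding y5_def using h3 isH_diff_iff[OF he] by simp
  have e1: "b1 - y1 = y2" unfolding y1_def y2_def by simp
  have e2: "b3 - y2 = y3" unfolding y2_def y3_def by simp
  have e3: "b2 - y3 = y4" unfolding y3_def y4_def by simp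
  have e4: "b1 - y4 = y5" unfolding y4_def y5_def by simp
  have e5: "b3 - y5 = e" unfolding y5_def by simp
  have "c2 e = c2 y1" unfolding y1_def using s2 by simp
  also have "\<dots> = c1 y1" using a1 a2 n1 by simp
  also have "\<dots> = c1 y2" using s1[rule_format, of y1] e1 by simp
  also have "\<dots> = c3 y2" using a1 a3 n2 by simp
  also have "\<dots> = c3 y3" using s3[rule_format, of y2] e2 by simp
  also have "\<dots> = c2 y3" using a2 a3 n3 by simp
  also have "\<dots> = c2 y4" using s2[rule_format, of y3] e3 by simp
  also have "\<dots> = c1 y4" using a1 a2 n4 by simp
  also have "\<dots> = c1 y5" using s1[rule_format, of y4] e4 by simp
  also have "\<dots> = c3 y5" using a1 a3 n5 by simp
  also have "\<dots> = c3 e" using s3[rule_format, of y5] e5 by simp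
  finally show ?thesis by simp
qed

lemma half_lemma:
  assumes "isH (2 * x)" "\<not> isH x" "isH (2 * y)" "\<not> isH y"
  shows "isH (x - y)"
proof -
  obtain a :: int where a: "2 * x = of_int a / 6" using assms(1) by (auto simp: isH_def)
  obtain b :: int where b: "2 * y = of_int b / 6" using assms(3) by (auto simp: isH_def)
  have oa: "odd a"
  proof
    assume "even a"
    then obtain a' where "a = 2 * a'" by blast
    then have ex: "x = of_int a' / 6" using a by simp
    have "isH x" unfolding ex by (rule isH_int)
    then show False using assms(2) by simp
  qed
  have ob: "odd b"
  proof
    assume "even b"
    then obtain b' where "b = 2 * b'" by blast
    then have ey: "y = of_int b' / 6" using b by simp
    have "isH y" unfolding ey by (rule isH_int)
    then show False using assms(4) by simp
  qed
  have "even (a - b)" using oa ob by simp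
  then obtain d where d: "a - b = 2 * d" by blast
  have "x - y = (of_int a / 6 - of_int b / 6) / 2" using a b by simp
  also have "\<dots> = of_int (a - b) / 12" by (simp add: field_simps)
  also have "\<dots> = of_int d / 6" using d by simp
  finally have ex: "x - y = of_int d / 6" .
  show ?thesis unfolding ex by (rule isH_int)
qed

lemma three_axes:
  assumes s1: "\<forall>x. c1 (b1 - x) = c1 x" and s2: "\<forall>x. c2 (b2 - x) = c2 x"
    and s3: "\<forall>x. c3 (b3 - x) = c3 x"
    and a1: "\<forall>x. \<not> isH x \<longrightarrow> c1 x = p x" and a2: "\<forall>x. \<not> isH x \<longrightarrow> c2 x = p x"
    and a3: "\<forall>x. \<not> isH x \<longrightarrow> c3 x = p x"
    and n1: "\<not> isH b1" and n2: "\<not> isH b2" and n3: "\<not> isH b3"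
    and n12: "\<not> isH (b1 - b2)" and n13: "\<not> isH (b1 - b3)" and n23: "\<not> isH (b2 - b3)"
    and d12: "\<exists>e. isH e \<and> c1 e \<noteq> c2 e" and d13: "\<exists>e. isH e \<and> c1 e \<noteq> c3 e"
    and d23: "\<exists>e. isH e \<and> c2 e \<noteq> c3 e"
  shows False
proof -
  have n21: "\<not> isH (b2 - b1)" using n12 isH_neg_iff[of "b1 - b2"] by simp
  have n31: "\<not> isH (b3 - b1)" using n13 isH_neg_iff[of "b1 - b3"] by simp
  have n32: "\<not> isH (b3 - b2)" using n23 isH_neg_iff[of "b2 - b3"] by simp
  have A: "isH (b3 - b1 + b2)"
  proof (rule ccontr)
    assume h: "\<not> isH (b3 - b1 + b2)"
    obtain e where e: "isH e" "c2 e \<noteq> c3 e" using d23 by blast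
    have "c3 e = c2 e" by (rule walk3[OF s1 s2 s3 a1 a2 a3 n2 n12 h n13 n3 e(1)])
    then show False using e by simp
  qed
  have Bq: "isH (b3 - b2 + b1)"
  proof (rule ccontr)
    assume h: "\<not> isH (b3 - b2 + b1)"
    obtain e where e: "isH e" "c1 e \<noteq> c3 e" using d13 by blast
    have "c3 e = c1 e" by (rule walk3[OF s2 s1 s3 a2 a1 a3 n1 n21 h n23 n3 e(1)])
    then show False using e by simp
  qed
  have C: "isH (b2 - b3 + b1)"
  proof (rule ccontr)
    assume h: "\<not> isH (b2 - b3 + b1)"
    obtain e where e: "isH e" "c1 e \<noteq> c2 e" using d12 by blast
    have "c2 e = c1 e" by (rule walk3[OF s3 s1 s2 a3 a1 a2 n1 n31 h n32 n2 e(1)])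
    then show False using e by simp
  qed
  have "isH ((b3 - b1 + b2) + (b3 - b2 + b1))" using isH_add[OF A Bq] .
  then have h3: "isH (2 * b3)" by (simp add: algebra_simps)
  have "isH ((b3 - b1 + b2) + (b2 - b3 + b1))" using isH_add[OF A C] .
  then have h2: "isH (2 * b2)" by (simp add: algebra_simps)
  have "isH (b2 - b3)" by (rule half_lemma[OF h2 n2 h3 n3])
  then show False using n23 by simp
qed

fun sw :: "color \<Rightarrow> color" where "sw R = B" | "sw B = R"

definition flip0 :: "(int \<Rightarrow> color) \<Rightarrow> int \<Rightarrow> color" where
  "flip0 F k = (if k mod 6 = 0 then sw (F k) else F k)"

lemma sw_neq: "sw c \<noteq> c" by (cases c) auto

lemma col_zero: "col p F 0 = F 0"
  using col_H[of p F 0] by simp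

lemma flip_agree: assumes "x \<notin> \<int>" shows "col p (flip0 F) x = col p F x"
proof (cases "isH x")
  case False then show ?thesis by (simp add: col_nH)
next
  case True
  then obtain k where k: "x = of_int k / 6" by (auto simp: isH_def)
  have "k mod 6 \<noteq> 0"
  proof
    assume h: "k mod 6 = 0"
    define n where "n = k div 6"
    have kk: "k = 6 * n" using h mult_div_mod_eq[of 6 k] unfolding n_def by simp
    have "x = of_int n" using k unfolding kk by simp
    then show False using assms by simp
  qed
  have a: "col p (flip0 F) x = flip0 F (k mod 6)" by (subst k, rule col_H)
  have b: "col p F x = F (k mod 6)" by (subst k, rule col_H)
  show ?thesis using a b \<open>k mod 6 \<noteq> 0\<close> by (simp add: flip0_def)
qed

lemma flip_zero: "col p (flip0 F) 0 \<noteq> col p F 0"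
  by (simp add: col_zero flip0_def sw_neq)

lemma flip_valid: "flip0 F 1 = F 1" "flip0 F 5 = F 5" by (simp_all add: flip0_def)

lemma flip_dist:
  assumes op: "on_circle p" and nC: "\<not> CaseI p" and nR: "\<forall>b. isH b \<longrightarrow> \<not> RefSym p b"
    and nt: "\<not> isH t" and sy: "\<forall>x. col p F (x + t) = col p F x"
  shows "distinguishing (col p (flip0 F))"
  unfolding distinguishing_def
proof (intro allI impI)
  fix g
  define c1 where "c1 = col p F"
  define c2 where "c2 = col p (flip0 F)"
  assume hg0: "\<forall>x. col p (flip0 F) (act g x) = col p (flip0 F) x"
  then have hg: "\<forall>x. c2 (act g x) = c2 x" unfolding c2_def .
  have ag: "\<And>x. x \<notin> \<int> \<Longrightarrow> c2 x = c1 x" unfolding c1_def c2_def by (rule flip_agree)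
  have d0: "c2 0 \<noteq> c1 0" unfolding c1_def c2_def by (rule flip_zero)
  have oc1: "on_circle c1" unfolding c1_def by (rule col_on_circle[OF op])
  have oc2: "on_circle c2" unfolding c2_def by (rule col_on_circle[OF op])
  have sy1: "\<And>x. c1 (x + t) = c1 x" using sy unfolding c1_def by blast
  have tI: "t \<notin> \<int>" using nt notH_notInt by blast
  have mtI: "- t \<notin> \<int>" using tI by (metis Ints_minus minus_minus)
  show "is_identity g"
  proof (cases g)
    case (Trans a)
    have ha: "\<forall>x. c2 (x + a) = c2 x" using hg Trans by simp
    show ?thesis
    proof (cases "isH a")
      case True
      show ?thesis
      proof (cases "a \<in> \<int>")
        case True then show ?thesis using Trans by (simp add: is_identity_def)
      next
        case False
        have "\<forall>x. \<not> isH x \<longrightarrow> p (x + a) = p x"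
          by (rule sym_trans_H_p[OF \<open>isH a\<close>]) (use ha in \<open>simp add: c2_def\<close>)
        then have "CaseI p" unfolding CaseI_def using True False by blast
        then show ?thesis using nC by simp
      qed
    next
      case False
      have aI: "a \<notin> \<int>" using False notH_notInt by blast
      have e1: "c2 0 = c2 a" using ha[rule_format, of 0] by simp
      have e2: "c2 a = c1 a" using ag aI by blast
      have e3: "c1 a = c1 (a + t)" using sy1[of a] by simp
      show ?thesis
      proof (cases "a + t \<in> \<int>")
        case False
        have "c1 (a + t) = c2 (a + t)" using ag False by simp
        also have "\<dots> = c2 (t + a)" by (simp add: add.commute)
        also have "\<dots> = c2 t" using ha by blast
        also have "\<dots> = c1 t" using ag tI by blast
        also have "\<dots> = c1 0" using sy1[of 0] by simp
        finally have "c2 0 = c1 0" using e1 e2 e3 by simp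
        then show ?thesis using d0 by simp
      next
        case True
        have "c2 a = c2 (- t + (a + t))" by simp
        also have "\<dots> = c2 (- t)" by (rule per_Ints[OF oc2 True])
        also have "\<dots> = c1 (- t)" using ag mtI by blast
        also have "\<dots> = c1 (- t + t)" using sy1[of "- t"] by simp
        also have "\<dots> = c1 0" by simp
        finally have "c2 0 = c1 0" using e1 by simp
        then show ?thesis using d0 by simp
      qed
    qed
  next
    case (Refl a)
    define b where "b = 2 * a"
    have hb: "\<forall>x. c2 (b - x) = c2 x"
    proof
      fix x
      have "c2 (- x + 2 * a) = c2 x" using hg Refl by simp
      moreover have "- x + 2 * a = b - x" unfolding b_def by simp
      ultimately show "c2 (b - x) = c2 x" by simp
    qed
    show ?thesis
    proof (cases "isH b")
      case True
      have "RefSym p b" by (rule sym_refl_H_p[OF True]) (use hb in \<open>simp add: c2_def\<close>)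
      then show ?thesis using nR True by blast
    next
      case False
      have bI: "b \<notin> \<int>" using False notH_notInt by blast
      have e1: "c2 0 = c2 b" using hb[rule_format, of 0] by simp
      have e2: "c2 b = c1 b" using ag bI by blast
      show ?thesis
      proof (cases "b - t \<in> \<int>")
        case False
        have "c1 b = c1 ((b - t) + t)" by simp
        also have "\<dots> = c1 (b - t)" by (rule sy1)
        also have "\<dots> = c2 (b - t)" using ag False by simp
        also have "\<dots> = c2 t" using hb by blast
        also have "\<dots> = c1 t" using ag tI by blast
        also have "\<dots> = c1 0" using sy1[of 0] by simp
        finally have "c2 0 = c1 0" using e1 e2 by simp
        then show ?thesis using d0 by simp
      next
        case True
        have "c1 b = c1 (t + (b - t))" by simp
        also have "\<dots> = c1 t" by (rule per_Ints[OF oc1 True])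
        also have "\<dots> = c1 0" using sy1[of 0] by simp
        finally have "c2 0 = c1 0" using e1 e2 by simp
        then show ?thesis using d0 by simp
      qed
    qed
  qed
qed

lemma refl_conv:
  assumes "\<forall>x. c (act (Refl a) x) = c x"
  shows "\<forall>x. c (2 * a - x) = c x"
proof
  fix x
  have "c (- x + 2 * a) = c x" using assms by simp
  moreover have "- x + 2 * a = 2 * a - x" by simp
  ultimately show "c (2 * a - x) = c x" by simp
qed

lemma notInt_mod: assumes "of_int j / 6 \<notin> (\<int> :: real set)" shows "j mod 6 \<noteq> 0"
proof
  assume h: "j mod 6 = 0"
  define n where "n = j div 6"
  have kk: "j = 6 * n" using h mult_div_mod_eq[of 6 j] unfolding n_def by simp
  have "(of_int j / 6 :: real) = of_int n" unfolding kk by simp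
  then show False using assms by simp
qed

lemma mod_Int: assumes "j mod 6 = 0" shows "(of_int j / 6 :: real) \<in> \<int>"
proof -
  define n where "n = j div 6"
  have kk: "j = 6 * n" using assms mult_div_mod_eq[of 6 j] unfolding n_def by simp
  have "(of_int j / 6 :: real) = of_int n" unfolding kk by simp
  then show ?thesis by simp
qed

lemma caseA:
  assumes op: "on_circle p" and CI: "CaseI p"
    and asr: "\<forall>j. rotinv F j \<longrightarrow> j mod 6 = 0" and asf: "\<forall>m. \<not> refinv F m"
  shows "distinguishing (col p F)"
  unfolding distinguishing_def
proof (intro allI impI)
  fix g assume hg: "\<forall>x. col p F (act g x) = col p F x"
  obtain v where v: "isH v" "v \<notin> \<int>" "\<forall>x. \<not> isH x \<longrightarrow> p (x + v) = p x"
    using CI unfolding CaseI_def by blast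
  obtain j where j: "v = of_int j / 6" using v(1) by (auto simp: isH_def)
  have per: "\<forall>x. \<not> isH x \<longrightarrow> p (x + of_int j / 6) = p x" using v(3) j by simp
  have jm: "j mod 6 \<noteq> 0" using notInt_mod v(2) j by simp
  show "is_identity g"
  proof (cases g)
    case (Trans a)
    have ha: "\<forall>x. col p F (x + a) = col p F x" using hg Trans by simp
    show ?thesis
    proof (cases "isH a")
      case True
      then obtain i where i: "a = of_int i / 6" by (auto simp: isH_def)
      have "rotinv F i" by (rule sym_trans_H_rot) (use ha i in simp)
      then have imod: "i mod 6 = 0" using asr by blast
      have "a \<in> \<int>" unfolding i by (rule mod_Int[OF imod])
      then show ?thesis using Trans by (simp add: is_identity_def)
    next
      case False
      have "rotinv F j" by (rule KT_trans[OF per False ha])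
      then show ?thesis using asr jm by blast
    qed
  next
    case (Refl a)
    have hb: "\<forall>x. col p F (2 * a - x) = col p F x" using refl_conv hg Refl by blast
    show ?thesis
    proof (cases "isH (2 * a)")
      case True
      then obtain m where m: "2 * a = of_int m / 6" by (auto simp: isH_def)
      have "refinv F m" by (rule sym_refl_H_ref) (use hb m in simp)
      then show ?thesis using asf by blast
    next
      case False
      have "rotinv F j" by (rule KT_refl[OF per False hb])
      then show ?thesis using asr jm by blast
    qed
  qed
qed

lemma get_axis:
  assumes op: "on_circle p" and nC: "\<not> CaseI p"
    and NR: "\<forall>m. RefSym p (of_int m / 6) \<longrightarrow> \<not> refinv F m"
    and nd1: "\<not> distinguishing (col p F)" and nd2: "\<not> distinguishing (col p (flip0 F))"
  shows "\<exists>b. \<not> isH b \<and> (\<forall>x. col p F (b - x) = col p F x)"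
proof -
  obtain g where hg: "\<forall>x. col p F (act g x) = col p F x" and ni: "\<not> is_identity g"
    using nd1 unfolding distinguishing_def by blast
  show ?thesis
  proof (cases g)
    case (Trans a)
    have ha: "\<forall>x. col p F (x + a) = col p F x" using hg Trans by simp
    show ?thesis
    proof (cases "isH a")
      case True
      show ?thesis
      proof (cases "a \<in> \<int>")
        case True then show ?thesis using Trans ni by (simp add: is_identity_def)
      next
        case False
        have "\<forall>x. \<not> isH x \<longrightarrow> p (x + a) = p x" by (rule sym_trans_H_p[OF \<open>isH a\<close> ha])
        then have "CaseI p" unfolding CaseI_def using True False by blast
        then show ?thesis using nC by simp
      qed
    next
      case False
      show ?thesis
      proof (cases "\<exists>m. RefSym p (of_int m / 6)")
        case True
        then obtain m where m: "RefSym p (of_int m / 6)" by blast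
        have "refinv F m" by (rule KR_trans[OF m False ha])
        then show ?thesis using NR m by blast
      next
        case nex: False
        have nR: "\<forall>b. isH b \<longrightarrow> \<not> RefSym p b"
        proof (intro allI impI)
          fix b assume "isH b"
          then obtain k where k: "b = of_int k / 6" by (auto simp: isH_def)
          show "\<not> RefSym p b" unfolding k using nex by blast
        qed
        have "distinguishing (col p (flip0 F))" by (rule flip_dist[OF op nC nR False ha])
        then show ?thesis using nd2 by simp
      qed
    qed
  next
    case (Refl a)
    have hb: "\<forall>x. col p F (2 * a - x) = col p F x" using refl_conv hg Refl by blast
    show ?thesis
    proof (cases "isH (2 * a)")
      case True
      then obtain m where m: "2 * a = of_int m / 6" by (auto simp: isH_def)
      have "refinv F m" by (rule sym_refl_H_ref) (use hb m in simp)
      moreover have "RefSym p (of_int m / 6)" using sym_refl_H_p[OF True hb] m by simp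
      ultimately show ?thesis using NR by blast
    next
      case False
      then show ?thesis using hb by blast
    qed
  qed
qed

lemma axes_rot:
  assumes ni: "\<not> isH bi" and si: "\<forall>x. col p Fi (bi - x) = col p Fi x"
    and nj: "\<not> isH bj" and sj: "\<forall>x. col p Fj (bj - x) = col p Fj x"
    and h: "isH (bj - bi)"
  shows "rotrel Fi Fj"
proof -
  obtain m where m: "bj - bi = of_int m / 6" using h by (auto simp: isH_def)
  have "\<forall>k. Fj (k mod 6) = Fi ((k - m) mod 6)"
  proof
    fix k
    have "Fj (k mod 6) = p (bj - of_int k / 6)" by (rule moving_refl[OF nj sj])
    also have "bj - of_int k / 6 = bi - of_int (k - m) / 6" using m by (simp add: field_simps)
    also have "p \<dots> = Fi ((k - m) mod 6)" by (rule moving_refl[OF ni si, symmetric])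
    finally show "Fj (k mod 6) = Fi ((k - m) mod 6)" .
  qed
  then show ?thesis unfolding rotrel_def by blast
qed

lemma distinct_H:
  assumes "\<not> rotrel F G" shows "\<exists>e. isH e \<and> col p F e \<noteq> col p G e"
proof -
  have "\<not> (\<forall>k. G (k mod 6) = F ((k - 0) mod 6))" using assms unfolding rotrel_def by blast
  then obtain k where k: "G (k mod 6) \<noteq> F (k mod 6)" by auto
  have "col p F (of_int k / 6) \<noteq> col p G (of_int k / 6)" using k by (simp add: col_H)
  then show ?thesis using isH_int by blast
qed

lemma caseB:
  assumes op: "on_circle p" and nC: "\<not> CaseI p"
    and v1: "F1 1 = p (1/6)" "F1 5 = p (5/6)"
    and v2: "F2 1 = p (1/6)" "F2 5 = p (5/6)"
    and v3: "F3 1 = p (1/6)" "F3 5 = p (5/6)"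
    and r12: "\<not> rotrel F1 F2" and r13: "\<not> rotrel F1 F3" and r23: "\<not> rotrel F2 F3"
    and NR1: "\<forall>m. RefSym p (of_int m / 6) \<longrightarrow> \<not> refinv F1 m"
    and NR2: "\<forall>m. RefSym p (of_int m / 6) \<longrightarrow> \<not> refinv F2 m"
    and NR3: "\<forall>m. RefSym p (of_int m / 6) \<longrightarrow> \<not> refinv F3 m"
  shows "\<exists>F. F 1 = p (1/6) \<and> F 5 = p (5/6) \<and> distinguishing (col p F)"
proof (rule ccontr)
  assume H: "\<not> ?thesis"
  have nd: "\<And>F. F 1 = p (1/6) \<Longrightarrow> F 5 = p (5/6) \<Longrightarrow> \<not> distinguishing (col p F)" using H by blast
  have ax: "\<exists>b. \<not> isH b \<and> (\<forall>x. col p F (b - x) = col p F x)"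
    if "F 1 = p (1/6)" "F 5 = p (5/6)" "\<forall>m. RefSym p (of_int m / 6) \<longrightarrow> \<not> refinv F m" for F
  proof (rule get_axis[OF op nC that(3)])
    show "\<not> distinguishing (col p F)" using nd that by blast
    show "\<not> distinguishing (col p (flip0 F))" using nd[of "flip0 F"] that flip_valid by simp
  qed
  obtain b1 where b1: "\<not> isH b1" "\<forall>x. col p F1 (b1 - x) = col p F1 x" using ax[OF v1 NR1] by blast
  obtain b2 where b2: "\<not> isH b2" "\<forall>x. col p F2 (b2 - x) = col p F2 x" using ax[OF v2 NR2] by blast
  obtain b3 where b3: "\<not> isH b3" "\<forall>x. col p F3 (b3 - x) = col p F3 x" using ax[OF v3 NR3] by blast
  have n12: "\<not> isH (b1 - b2)"
  proof
    assume "isH (b1 - b2)"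
    then have "isH (b2 - b1)" using isH_neg_iff[of "b1 - b2"] by simp
    then show False using axes_rot[OF b1 b2] r12 by blast
  qed
  have n13: "\<not> isH (b1 - b3)"
  proof
    assume "isH (b1 - b3)"
    then have "isH (b3 - b1)" using isH_neg_iff[of "b1 - b3"] by simp
    then show False using axes_rot[OF b1 b3] r13 by blast
  qed
  have n23: "\<not> isH (b2 - b3)"
  proof
    assume "isH (b2 - b3)"
    then have "isH (b3 - b2)" using isH_neg_iff[of "b2 - b3"] by simp
    then show False using axes_rot[OF b2 b3] r23 by blast
  qed
  have ag: "\<And>F. \<forall>x. \<not> isH x \<longrightarrow> col p F x = p x" by (simp add: col_nH)
  show False
    by (rule three_axes[OF b1(2) b2(2) b3(2) ag ag ag b1(1) b2(1) b3(1) n12 n13 n23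
          distinct_H[OF r12] distinct_H[OF r13] distinct_H[OF r23]])
qed

definition pat :: "color \<Rightarrow> color \<Rightarrow> color \<Rightarrow> color \<Rightarrow> color \<Rightarrow> color \<Rightarrow> int \<Rightarrow> color" where
  "pat a0 a1 a2 a3 a4 a5 k = (if k mod 6 = 0 then a0 else if k mod 6 = 1 then a1 else
     if k mod 6 = 2 then a2 else if k mod 6 = 3 then a3 else if k mod 6 = 4 then a4 else a5)"

definition asym6 :: "(int \<Rightarrow> color) \<Rightarrow> bool" where
  "asym6 F \<longleftrightarrow> (\<forall>j\<in>{1,2,3,4,5::int}. \<exists>k\<in>{0,1,2,3,4,5::int}. F ((k + j) mod 6) \<noteq> F k) \<and>
     (\<forall>m\<in>{0,1,2,3,4,5::int}. \<exists>k\<in>{0,1,2,3,4,5::int}. F ((m - k) mod 6) \<noteq> F k)"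

definition norot6 :: "(int \<Rightarrow> color) \<Rightarrow> (int \<Rightarrow> color) \<Rightarrow> bool" where
  "norot6 U V \<longleftrightarrow> (\<forall>s\<in>{0,1,2,3,4,5}. \<exists>k\<in>{0,1,2,3,4,5::int}. V k \<noteq> U ((k - s) mod 6))"

lemma six_cases: "(r::int) mod 6 \<in> {0,1,2,3,4,5}"
proof -
  have "0 \<le> r mod 6" "r mod 6 < 6" by auto
  then show ?thesis by auto
qed

lemma small_mod: "(k::int) \<in> {0,1,2,3,4,5} \<Longrightarrow> k mod 6 = k" by auto

lemma asym6_rot: assumes "asym6 F" "rotinv F j" shows "j mod 6 = 0"
proof (rule ccontr)
  assume h: "j mod 6 \<noteq> 0"
  have r: "j mod 6 \<in> {1,2,3,4,5}" using six_cases[of j] h by simp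
  have A: "\<forall>j\<in>{1,2,3,4,5::int}. \<exists>k\<in>{0,1,2,3,4,5::int}. F ((k + j) mod 6) \<noteq> F k"
    using assms(1) unfolding asym6_def by (rule conjunct1)
  obtain k where k: "k \<in> {0,1,2,3,4,5}" "F ((k + j mod 6) mod 6) \<noteq> F k"
    using bspec[OF A r] by (rule bexE)
  have "F ((k + j) mod 6) = F (k mod 6)" using assms(2) unfolding rotinv_def by (rule spec)
  moreover have "(k + j mod 6) mod 6 = (k + j) mod 6" by (rule mod_add_right_eq)
  ultimately show False using k small_mod[OF k(1)] by simp
qed

lemma asym6_ref: assumes "asym6 F" shows "\<not> refinv F m"
proof
  assume h: "refinv F m"
  have A: "\<forall>m\<in>{0,1,2,3,4,5::int}. \<exists>k\<in>{0,1,2,3,4,5::int}. F ((m - k) mod 6) \<noteq> F k"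
    using assms(1) unfolding asym6_def by (rule conjunct2)
  obtain k where k: "k \<in> {0,1,2,3,4,5}" "F ((m mod 6 - k) mod 6) \<noteq> F k"
    using bspec[OF A six_cases[of m]] by (rule bexE)
  have "F ((m - k) mod 6) = F (k mod 6)" using h unfolding refinv_def by (rule spec)
  moreover have "(m mod 6 - k) mod 6 = (m - k) mod 6" by (rule mod_diff_left_eq)
  ultimately show False using k small_mod[OF k(1)] by simp
qed

lemma norot6_rot: assumes "norot6 U V" shows "\<not> rotrel U V"
proof
  assume "rotrel U V"
  then obtain s where s: "\<forall>k. V (k mod 6) = U ((k - s) mod 6)" unfolding rotrel_def by (rule exE)
  have A: "\<forall>s\<in>{0,1,2,3,4,5}. \<exists>k\<in>{0,1,2,3,4,5::int}. V k \<noteq> U ((k - s) mod 6)"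
    using assms unfolding norot6_def .
  obtain k where k: "k \<in> {0,1,2,3,4,5}" "V k \<noteq> U ((k - s mod 6) mod 6)"
    using bspec[OF A six_cases[of s]] by (rule bexE)
  have "V (k mod 6) = U ((k - s) mod 6)" using s by (rule spec)
  moreover have "(k - s mod 6) mod 6 = (k - s) mod 6" by (rule mod_diff_right_eq)
  ultimately show False using k small_mod[OF k(1)] by simp
qed

lemma noref_one:
  assumes "\<exists>k\<in>{0,1,2,3,4,5}. F ((rs - k) mod 6) \<noteq> F k" "m mod 6 = rs"
  shows "\<not> refinv F m"
proof
  assume h: "refinv F m"
  obtain k where k: "k \<in> {0,1,2,3,4,5}" "F ((rs - k) mod 6) \<noteq> F k" using assms(1) by (rule bexE)
  have "F ((m - k) mod 6) = F (k mod 6)" using h unfolding refinv_def by (rule spec)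
  moreover have "(m mod 6 - k) mod 6 = (m - k) mod 6" by (rule mod_diff_left_eq)
  ultimately show False using k small_mod[OF k(1)] assms(2) by simp
qed

lemma noref_others:
  assumes "\<forall>r\<in>{0,1,2,3,4,5}. r \<noteq> rs \<longrightarrow> (\<exists>k\<in>{0,1,2,3,4,5}. F ((r - k) mod 6) \<noteq> F k)"
    "m mod 6 \<noteq> rs"
  shows "\<not> refinv F m"
proof -
  have "m mod 6 \<noteq> rs \<longrightarrow> (\<exists>k\<in>{0,1,2,3,4,5}. F ((m mod 6 - k) mod 6) \<noteq> F k)"
    using bspec[OF assms(1) six_cases[of m]] .
  then have "\<exists>k\<in>{0,1,2,3,4,5}. F ((m mod 6 - k) mod 6) \<noteq> F k" using assms(2) by (rule mp)
  then show ?thesis by (rule noref_one) simp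
qed

lemma Int_mod: assumes "(of_int j / 6 :: real) \<in> \<int>" shows "j mod 6 = 0"
proof -
  obtain n where n: "(of_int j / 6 :: real) = of_int n" using assms Ints_cases by blast
  then have "(of_int j :: real) = of_int (6 * n)" by simp
  then have "j = 6 * n" using of_int_eq_iff by blast
  then show ?thesis by simp
qed

lemma refsym_unique:
  assumes nC: "\<not> CaseI p" and r1: "RefSym p (of_int m / 6)" and r0: "RefSym p (of_int m0 / 6)"
  shows "m mod 6 = m0 mod 6"
proof (rule ccontr)
  assume h: "m mod 6 \<noteq> m0 mod 6"
  define v where "v = (of_int (m - m0) / 6 :: real)"
  have hv: "isH v" unfolding v_def by (rule isH_int)
  have "(m - m0) mod 6 \<noteq> 0" using h by (metis mod_eq_dvd_iff dvd_eq_mod_eq_0)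
  then have vI: "v \<notin> \<int>" unfolding v_def using Int_mod by blast
  have "\<forall>x. \<not> isH x \<longrightarrow> p (x + v) = p x"
  proof (intro allI impI)
    fix x assume nx: "\<not> isH x"
    have n0: "\<not> isH (of_int m0 / 6 - x)" using nx isH_diff_iff2[OF isH_int] by blast
    have e: "x + v = of_int m / 6 - (of_int m0 / 6 - x)" unfolding v_def by (simp add: field_simps)
    have "p (x + v) = p (of_int m / 6 - (of_int m0 / 6 - x))" by (simp only: e)
    also have "\<dots> = p (of_int m0 / 6 - x)" using r1 n0 unfolding RefSym_def by blast
    also have "\<dots> = p x" using r0 nx unfolding RefSym_def by blast
    finally show "p (x + v) = p x" .
  qed
  then have "CaseI p" unfolding CaseI_def using hv vI by blast
  then show False using nC by simp
qed

lemma caseB_special: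
  assumes op: "on_circle p" and nC: "\<not> CaseI p"
    and v1: "Fa 1 = p (1/6)" "Fa 5 = p (5/6)"
    and v2: "Fb 1 = p (1/6)" "Fb 5 = p (5/6)"
    and v3: "Fc 1 = p (1/6)" "Fc 5 = p (5/6)"
    and r12: "norot6 Fa Fb" and r13: "norot6 Fa Fc" and r23: "norot6 Fb Fc"
    and rsx: "\<exists>m0. RefSym p (of_int m0 / 6) \<and> m0 mod 6 = rs"
    and c1: "\<exists>k\<in>{0,1,2,3,4,5}. Fa ((rs - k) mod 6) \<noteq> Fa k"
    and c2: "\<exists>k\<in>{0,1,2,3,4,5}. Fb ((rs - k) mod 6) \<noteq> Fb k"
    and c3: "\<exists>k\<in>{0,1,2,3,4,5}. Fc ((rs - k) mod 6) \<noteq> Fc k"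
  shows "\<exists>F. F 1 = p (1/6) \<and> F 5 = p (5/6) \<and> distinguishing (col p F)"
proof -
  obtain m0 where m0: "RefSym p (of_int m0 / 6)" "m0 mod 6 = rs" using rsx by blast
  have u: "m mod 6 = rs" if "RefSym p (of_int m / 6)" for m
    using refsym_unique[OF nC that m0(1)] m0(2) by simp
  show ?thesis
  proof (rule caseB[OF op nC v1 v2 v3 norot6_rot[OF r12] norot6_rot[OF r13] norot6_rot[OF r23]])
    show "\<forall>m. RefSym p (of_int m / 6) \<longrightarrow> \<not> refinv Fa m"
      by (intro allI impI, rule noref_one[OF c1 u])
    show "\<forall>m. RefSym p (of_int m / 6) \<longrightarrow> \<not> refinv Fb m"
      by (intro allI impI, rule noref_one[OF c2 u])
    show "\<forall>m. RefSym p (of_int m / 6) \<longrightarrow> \<not> refinv Fc m"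
      by (intro allI impI, rule noref_one[OF c3 u])
  qed
qed

lemma caseB_main:
  assumes op: "on_circle p" and nC: "\<not> CaseI p"
    and v1: "Fa 1 = p (1/6)" "Fa 5 = p (5/6)"
    and v2: "Fb 1 = p (1/6)" "Fb 5 = p (5/6)"
    and v3: "Fc 1 = p (1/6)" "Fc 5 = p (5/6)"
    and r12: "norot6 Fa Fb" and r13: "norot6 Fa Fc" and r23: "norot6 Fb Fc"
    and rsx: "\<not> (\<exists>m0. RefSym p (of_int m0 / 6) \<and> m0 mod 6 = rs)"
    and c1: "\<forall>r\<in>{0,1,2,3,4,5}. r \<noteq> rs \<longrightarrow> (\<exists>k\<in>{0,1,2,3,4,5}. Fa ((r - k) mod 6) \<noteq> Fa k)"
    and c2: "\<forall>r\<in>{0,1,2,3,4,5}. r \<noteq> rs \<longrightarrow> (\<exists>k\<in>{0,1,2,3,4,5}. Fb ((r - k) mod 6) \<noteq> Fb k)"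
    and c3: "\<forall>r\<in>{0,1,2,3,4,5}. r \<noteq> rs \<longrightarrow> (\<exists>k\<in>{0,1,2,3,4,5}. Fc ((r - k) mod 6) \<noteq> Fc k)"
  shows "\<exists>F. F 1 = p (1/6) \<and> F 5 = p (5/6) \<and> distinguishing (col p F)"
proof -
  have u: "m mod 6 \<noteq> rs" if "RefSym p (of_int m / 6)" for m using rsx that by blast
  show ?thesis
  proof (rule caseB[OF op nC v1 v2 v3 norot6_rot[OF r12] norot6_rot[OF r13] norot6_rot[OF r23]])
    show "\<forall>m. RefSym p (of_int m / 6) \<longrightarrow> \<not> refinv Fa m"
      by (intro allI impI, rule noref_others[OF c1 u])
    show "\<forall>m. RefSym p (of_int m / 6) \<longrightarrow> \<not> refinv Fb m"
      by (intro allI impI, rule noref_others[OF c2 u])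
    show "\<forall>m. RefSym p (of_int m / 6) \<longrightarrow> \<not> refinv Fc m"
      by (intro allI impI, rule noref_others[OF c3 u])
  qed
qed

lemma caseA_fin:
  assumes "on_circle p" "CaseI p" "asym6 F" "F 1 = p (1/6)" "F 5 = p (5/6)"
  shows "\<exists>F. F 1 = p (1/6) \<and> F 5 = p (5/6) \<and> distinguishing (col p F)"
  using caseA[OF assms(1,2)] asym6_rot[OF assms(3)] asym6_ref[OF assms(3)] assms(4,5) by blast

lemma qcases:
  obtains "p (1/6) = R" "p (5/6) = R" | "p (1/6) = R" "p (5/6) = B"
        | "p (1/6) = B" "p (5/6) = R" | "p (1/6) = B" "p (5/6) = B"
  by (cases "p (1/6)"; cases "p (5/6)") auto

lemma main_ext:
  assumes op: "on_circle p"
  shows "\<exists>F. F 1 = p (1/6) \<and> F 5 = p (5/6) \<and> distinguishing (col p F)"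
proof (cases "CaseI p")
  case CI: True
  show ?thesis
  proof (cases rule: qcases[of p])

    assume q: "p (1/6) = R" "p (5/6) = R"
    show ?thesis
      by (rule caseA_fin[OF op CI, where F="pat B R R B B R"]) (simp_all add: asym6_def pat_def q)
  next

    assume q: "p (1/6) = R" "p (5/6) = B"
    show ?thesis
      by (rule caseA_fin[OF op CI, where F="pat R R B R B B"]) (simp_all add: asym6_def pat_def q)
  next

    assume q: "p (1/6) = B" "p (5/6) = R"
    show ?thesis
      by (rule caseA_fin[OF op CI, where F="pat R B R B B R"]) (simp_all add: asym6_def pat_def q)
  next

    assume q: "p (1/6) = B" "p (5/6) = B"
    show ?thesis
      by (rule caseA_fin[OF op CI, where F="pat R B R R B B"]) (simp_all add: asym6_def pat_def q)
  qed
next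
  case nC: False
  show ?thesis
  proof (cases rule: qcases[of p])
    assume q: "p (1/6) = R" "p (5/6) = R"
    show ?thesis
    proof (cases "\<exists>m0. RefSym p (of_int m0 / 6) \<and> m0 mod 6 = 2")
      case True
      show ?thesis
        by (rule caseB_special[where Fa="pat R R R B R R" and Fb="pat R R R B B R" and Fc="pat R R B R B R", OF op nC _ _ _ _ _ _ _ _ _ True])
           (simp_all add: norot6_def pat_def q)
    next
      case False
      show ?thesis
        by (rule caseB_main[where Fa="pat R R R R B R" and Fb="pat B R R B B R" and Fc="pat B R B R R R", OF op nC _ _ _ _ _ _ _ _ _ False])
           (simp_all add: norot6_def pat_def q)
    qed
  next
    assume q: "p (1/6) = R" "p (5/6) = B"
    show ?thesis
    proof (cases "\<exists>m0. RefSym p (of_int m0 / 6) \<and> m0 mod 6 = 4")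
      case True
      show ?thesis
        by (rule caseB_special[where Fa="pat R R R R B B" and Fb="pat R R R B R B" and Fc="pat R R R B B B", OF op nC _ _ _ _ _ _ _ _ _ True])
           (simp_all add: norot6_def pat_def q)
    next
      case False
      show ?thesis
        by (rule caseB_main[where Fa="pat R R R R R B" and Fb="pat R R B R B B" and Fc="pat R R B B R B", OF op nC _ _ _ _ _ _ _ _ _ False])
           (simp_all add: norot6_def pat_def q)
    qed
  next
    assume q: "p (1/6) = B" "p (5/6) = R"
    show ?thesis
    proof (cases "\<exists>m0. RefSym p (of_int m0 / 6) \<and> m0 mod 6 = 2")
      case True
      show ?thesis
        by (rule caseB_special[where Fa="pat R B R B R R" and Fb="pat R B R B B R" and Fc="pat R B B R R R", OF op nC _ _ _ _ _ _ _ _ _ True])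
           (simp_all add: norot6_def pat_def q)
    next
      case False
      show ?thesis
        by (rule caseB_main[where Fa="pat R B R R R R" and Fb="pat R B R B B R" and Fc="pat R B B R B R", OF op nC _ _ _ _ _ _ _ _ _ False])
           (simp_all add: norot6_def pat_def q)
    qed
  next
    assume q: "p (1/6) = B" "p (5/6) = B"
    show ?thesis
    proof (cases "\<exists>m0. RefSym p (of_int m0 / 6) \<and> m0 mod 6 = 0")
      case True
      show ?thesis
        by (rule caseB_special[where Fa="pat R B R R B B" and Fb="pat R B R B B B" and Fc="pat R B B R R B", OF op nC _ _ _ _ _ _ _ _ _ True])
           (simp_all add: norot6_def pat_def q)
    next
      case False
      show ?thesis
        by (rule caseB_main[where Fa="pat R B R R R B" and Fb="pat R B R R B B" and Fc="pat R B B R R B", OF op nC _ _ _ _ _ _ _ _ _ False])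
           (simp_all add: norot6_def pat_def q)
    qed
  qed
qed

theorem lemma2p3p8:
  shows "P {0, 1/3, 1/2, 2/3}"
  unfolding P_def
proof (intro conjI allI impI)
  show "trivial_pointwise_stabilizer {0, 1/3, 1/2, 2/3}" by (rule trivstab)
next
  fix p :: "real \<Rightarrow> color" assume op: "on_circle p"
  obtain F where F: "F 1 = p (1/6)" "F 5 = p (5/6)" "distinguishing (col p F)"
    using main_ext[OF op] by blast
  show "\<exists>c. on_circle c \<and> distinguishing c \<and> (\<forall>x. \<not> in_circle_set x {0, 1/3, 1/2, 2/3} \<longrightarrow> c x = p x)"
  proof (intro exI conjI allI impI)
    show "on_circle (col p F)" by (rule col_on_circle[OF op])
    show "distinguishing (col p F)" by (rule F(3))
    fix x assume "\<not> in_circle_set x {0, 1/3, 1/2, 2/3}"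
    then show "col p F x = p x" by (rule col_agree[OF op F(1) F(2)])
  qed
qed

end
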